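(* Let $\{\phi_j\}_{j\in\mathbb Z}$ be the Fourier basis $\phi_j(t)=e^{\mathrm ij\pi t}$, $T=\{t_n\}_{n=1}^N\subseteq[-1,1]$ a set of $N$ scattered data points with density $h$. Then for each $0<\epsilon<1$ there exists $c(\epsilon)>0$ such that if $h\le c(\epsilon)M^{-1}$, then the least-squares problem $\min_z\|UP_Mz-y\|$ over $z$ supported in $\{-M,\dots,M-1\}$ has a unique solution $\check x$, and it satisfies $$\|x-\check x\|\le\left(1+\frac1{\sqrt{1-\epsilon}}\right)\|x-P_Mx\|_{1,w}+\frac1{\sqrt{1-\epsilon}}\eta$$ for any weights $w=\{w_i\}$ with $w_i\ge1$.
   Context: Fourier setting: $D=(-1,1)$, $\nu=1/2$, basis indexed by $\mathbb Z$. $h=\sup_{t\in(-1,1)}\min_n|t-t_n|$; Voronoi cells $V_n=\{t\in(-1,1):|t-t_n|\le|t-t_m|\ \forall m\ne n\}$; $\tau_n=\int_{V_n}\nu$. $U_{n,j}=\sqrt{\tau_n}\phi_j(t_n)$, $j\in\mathbb Z$. $P_M$ is the coordinate projection onto indices $\{-M,\dots,M-1\}$. $\|z\|_{1,w}=\sum_{i\in\mathbb Z}w_i|z_i|$, $\|\cdot\|$ the $\ell^2$ norm. Target $f=\sum_jx_j\phi_j$ with coefficient sequence $x$; data $y=\{\sqrt{\tau_n}(f(t_n)+e_n)\}$, $|e_n|\le\eta$. *)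

theory Defs
  imports "HOL-Analysis.Analysis"
begin

definition fourier :: "int \<Rightarrow> real \<Rightarrow> complex" where
  "fourier j t = exp (\<i> * of_int j * of_real pi * of_real t)"

definition fill_dist :: "nat \<Rightarrow> (nat \<Rightarrow> real) \<Rightarrow> real" where
  "fill_dist N t = Sup ((\<lambda>s. Min ((\<lambda>n. \<bar>s - t n\<bar>) ` {1..N})) ` {-1<..<1})"

definition voronoi :: "nat \<Rightarrow> (nat \<Rightarrow> real) \<Rightarrow> nat \<Rightarrow> real set" where
  "voronoi N t n = {s \<in> {-1<..<1}. \<forall>m\<in>{1..N}. m \<noteq> n \<longrightarrow> \<bar>s - t n\<bar> \<le> \<bar>s - t m\<bar>}"

definition tau :: "nat \<Rightarrow> (nat \<Rightarrow> real) \<Rightarrow> nat \<Rightarrow> real" where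
  "tau N t n = integral (voronoi N t n) (\<lambda>_. 1/2)"

definition Umat :: "nat \<Rightarrow> (nat \<Rightarrow> real) \<Rightarrow> nat \<Rightarrow> int \<Rightarrow> complex" where
  "Umat N t n j = complex_of_real (sqrt (tau N t n)) * fourier j (t n)"

definition projM :: "nat \<Rightarrow> (int \<Rightarrow> complex) \<Rightarrow> int \<Rightarrow> complex" where
  "projM M z j = (if j \<in> {- int M..<int M} then z j else 0)"

definition lsq_residual ::
  "nat \<Rightarrow> (nat \<Rightarrow> real) \<Rightarrow> nat \<Rightarrow> (nat \<Rightarrow> complex) \<Rightarrow> (int \<Rightarrow> complex) \<Rightarrow> real" where
  "lsq_residual N t M y z =
     sqrt (\<Sum>n=1..N. (cmod ((\<Sum>j\<in>{- int M..<int M}. Umat N t n j * projM M z j) - y n))\<^sup>2)"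

definition l2norm :: "(int \<Rightarrow> complex) \<Rightarrow> real" where
  "l2norm z = sqrt (infsum (\<lambda>j. (cmod (z j))\<^sup>2) UNIV)"

definition wl1norm :: "(int \<Rightarrow> real) \<Rightarrow> (int \<Rightarrow> complex) \<Rightarrow> real" where
  "wl1norm w z = infsum (\<lambda>i. w i * cmod (z i)) UNIV"

end

theory Submission
  imports Defs
begin


lemma fourier_deriv:
  "((fourier j) has_vector_derivative (\<i> * of_int j * of_real pi) * fourier j s) (at s within S)"
proof -
  let ?A = "\<i> * of_int j * of_real pi"
  have e: "fourier j = (\<lambda>t. exp (t *\<^sub>R ?A))"
    by (rule ext) (simp add: fourier_def scaleR_conv_of_real algebra_simps)
  show ?thesis unfolding e
    using exp_scaleR_has_vector_derivative_right[of ?A s S] by (simp add: mult.commute)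
qed

lemma fourier_mult_cnj: "fourier j s * cnj (fourier k s) = fourier (j - k) s"
  by (simp add: fourier_def exp_cnj flip: exp_add) (simp add: algebra_simps)

lemma cmod_fourier [simp]: "cmod (fourier j s) = 1"
  unfolding fourier_def
  by (metis mult.commute mult.left_commute norm_exp_i_times of_real_mult of_real_of_int_eq)

lemma fourier_integral:
  "(fourier m has_integral (if m = 0 then 2 else 0)) {-1..1}"
proof (cases "m = 0")
  case True
  then have "fourier m = (\<lambda>_. 1)" by (auto simp: fourier_def)
  moreover have "((\<lambda>_. 1::complex) has_integral 2) {-1..1::real}"
    using has_integral_const_real[of "1::complex" "-1::real" 1] by (simp add: scaleR_conv_of_real)
  ultimately show ?thesis using True by (simp add: fourier_def)
next
  case False
  let ?c = "\<i> * of_int m * of_real pi"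
  have c0: "?c \<noteq> 0" using False by simp
  have "((\<lambda>s. fourier m s / ?c) has_vector_derivative fourier m s) (at s within {-1..1})" for s
  proof -
    have "((\<lambda>s. fourier m s / ?c) has_vector_derivative (?c * fourier m s) / ?c) (at s within {-1..1})"
      using has_vector_derivative_divide[OF fourier_deriv] by blast
    then show ?thesis using c0 by simp
  qed
  then have "(fourier m has_integral (fourier m 1 / ?c - fourier m (-1) / ?c)) {-1..1}"
    by (intro fundamental_theorem_of_calculus) auto
  moreover have "fourier m 1 = fourier m (-1)"
  proof -
    have e1: "exp (complex_of_real (2 * of_int m * pi) * \<i>) = 1"
      by (rule exp_integer_2pi) simp
    have e2: "fourier m (-1) * exp (complex_of_real (2 * of_int m * pi) * \<i>) = fourier m 1"
      by (simp add: fourier_def flip: exp_add) (simp add: algebra_simps)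
    show ?thesis using e1 e2 by (metis mult_1_right)
  qed
  ultimately show ?thesis using False by simp
qed

definition tp :: "int set \<Rightarrow> (int \<Rightarrow> complex) \<Rightarrow> real \<Rightarrow> complex" where
  "tp K b s = (\<Sum>j\<in>K. b j * fourier j s)"

lemma tp_deriv:
  "(tp K b has_vector_derivative tp K (\<lambda>j. b j * (\<i> * of_int j * of_real pi)) s) (at s within S)"
  unfolding tp_def
  apply (rule has_vector_derivative_sum)
  subgoal for j
    using has_vector_derivative_mult_right[OF fourier_deriv, of "b j" j s S]
    by (simp add: algebra_simps)
  done

lemma continuous_on_tp: "continuous_on S (tp K b)"
  by (metis (full_types) continuous_on_eq_continuous_within has_vector_derivative_continuous tp_deriv)

lemma tp_norm_sq_integral:
  assumes "finite K"
  shows "((\<lambda>s. (cmod (tp K b s))\<^sup>2) has_integral (2 * (\<Sum>j\<in>K. (cmod (b j))\<^sup>2))) {-1..1}"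
proof -
  have eq: "complex_of_real ((cmod (tp K b s))\<^sup>2) = (\<Sum>j\<in>K. \<Sum>k\<in>K. b j * cnj (b k) * fourier (j - k) s)" for s
  proof -
    have "complex_of_real ((cmod (tp K b s))\<^sup>2) = tp K b s * cnj (tp K b s)"
      by (simp add: complex_norm_square flip: of_real_power)
    also have "\<dots> = (\<Sum>j\<in>K. \<Sum>k\<in>K. (b j * fourier j s) * cnj (b k * fourier k s))"
      unfolding tp_def cnj_sum sum_product ..
    also have "\<dots> = (\<Sum>j\<in>K. \<Sum>k\<in>K. b j * cnj (b k) * (fourier j s * cnj (fourier k s)))"
      by (simp add: algebra_simps)
    finally show ?thesis by (simp add: fourier_mult_cnj)
  qed
  have "((\<lambda>s. \<Sum>j\<in>K. \<Sum>k\<in>K. b j * cnj (b k) * fourier (j - k) s) has_integral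
        (\<Sum>j\<in>K. \<Sum>k\<in>K. b j * cnj (b k) * (if j - k = 0 then 2 else 0))) {-1..1}"
    by (intro has_integral_sum assms has_integral_mult_right fourier_integral)
  moreover have "(\<Sum>j\<in>K. \<Sum>k\<in>K. b j * cnj (b k) * (if j - k = 0 then 2 else 0)) =
      complex_of_real (2 * (\<Sum>j\<in>K. (cmod (b j))\<^sup>2))"
  proof -
    have "(\<Sum>j\<in>K. \<Sum>k\<in>K. b j * cnj (b k) * (if j - k = 0 then 2 else 0)) = (\<Sum>j\<in>K. b j * cnj (b j) * 2)"
      using assms by (simp add: if_distrib cong: if_cong)
    also have "\<dots> = (\<Sum>j\<in>K. complex_of_real (2 * (cmod (b j))\<^sup>2))"
      by (intro sum.cong refl) (subst of_real_mult, subst complex_norm_square, simp)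
    finally show ?thesis by (simp add: sum_distrib_left)
  qed
  ultimately have "((\<lambda>s. complex_of_real ((cmod (tp K b s))\<^sup>2)) has_integral
       complex_of_real (2 * (\<Sum>j\<in>K. (cmod (b j))\<^sup>2))) {-1..1}"
    unfolding eq by simp
  from has_integral_Re[OF this] show ?thesis by simp
qed


definition cell :: "nat \<Rightarrow> (nat \<Rightarrow> real) \<Rightarrow> nat \<Rightarrow> real set" where
  "cell N t n = {s \<in> {-1..1}. \<forall>m\<in>{1..N}. \<bar>s - t n\<bar> \<le> \<bar>s - t m\<bar>}"

lemma halfline_is_interval: "is_interval {s::real. \<bar>s - a\<bar> \<le> \<bar>s - b\<bar>}"
proof -
  have eq: "{s::real. \<bar>s - a\<bar> \<le> \<bar>s - b\<bar>} = {s. 2 * s * (b - a) \<le> b^2 - a^2}"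
  proof -
    have "\<bar>s - a\<bar> \<le> \<bar>s - b\<bar> \<longleftrightarrow> (s-a)^2 \<le> (s-b)^2" for s
      by (metis abs_le_square_iff)
    then show ?thesis by (auto simp: power2_eq_square algebra_simps)
  qed
  show ?thesis unfolding eq is_interval_1
  proof (intro ballI allI impI)
    fix x y z :: real
    assume "x \<in> {s. 2 * s * (b - a) \<le> b\<^sup>2 - a\<^sup>2}" "y \<in> {s. 2 * s * (b - a) \<le> b\<^sup>2 - a\<^sup>2}" "x \<le> z \<and> z \<le> y"
    then have xs: "2 * x * (b - a) \<le> b\<^sup>2 - a\<^sup>2" "2 * y * (b - a) \<le> b\<^sup>2 - a\<^sup>2" "x \<le> z" "z \<le> y" by auto
    have "2 * z * (b - a) \<le> b\<^sup>2 - a\<^sup>2"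
    proof (cases "b \<ge> a")
      case True
      have "2 * z * (b - a) \<le> 2 * y * (b - a)" using True xs by (intro mult_right_mono) auto
      then show ?thesis using xs by linarith
    next
      case False
      have "2 * z * (b - a) \<le> 2 * x * (b - a)" using False xs by (intro mult_right_mono_neg) auto
      then show ?thesis using xs by linarith
    qed
    then show "z \<in> {s. 2 * s * (b - a) \<le> b\<^sup>2 - a\<^sup>2}" by simp
  qed
qed

lemma cell_eq: "cell N t n = {-1..1} \<inter> (\<Inter>m\<in>{1..N}. {s. \<bar>s - t n\<bar> \<le> \<bar>s - t m\<bar>})"
  unfolding cell_def by auto

lemma cell_interval: "\<exists>a b. cell N t n = {a..b}"
proof -
  have "closed (cell N t n)" unfolding cell_eq
    by (intro closed_Int closed_INT ballI closed_Collect_le continuous_intros)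
  moreover have "bounded (cell N t n)" unfolding cell_eq by (intro bounded_Int) auto
  ultimately have "compact (cell N t n)" using compact_eq_bounded_closed by blast
  moreover have "is_interval (cell N t n)" unfolding cell_eq
    unfolding is_interval_convex_1
    by (intro convex_Int convex_INT ballI) (auto simp flip: is_interval_convex_1 intro: halfline_is_interval)
  ultimately show ?thesis using connected_compact_interval_1 is_interval_connected by blast
qed

lemma t_in_cell: "t n \<in> {-1..1} \<Longrightarrow> t n \<in> cell N t n"
  unfolding cell_def by auto

lemma voronoi_eq: "voronoi N t n = cell N t n \<inter> {-1<..<1}"
  unfolding voronoi_def cell_def by auto

lemma cell_subset: "cell N t n \<subseteq> {-1..1}"
  unfolding cell_def by auto

context
  fixes N :: nat and t :: "nat \<Rightarrow> real"
  assumes N0: "0 < N" and tin: "\<forall>n\<in>{1..N}. t n \<in> {-1..1}"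
begin

lemma min_dist_bdd: "bdd_above ((\<lambda>s. Min ((\<lambda>n. \<bar>s - t n\<bar>) ` {1..N})) ` {-1<..<1})"
proof (rule bdd_aboveI2)
  fix s :: real assume s: "s \<in> {-1<..<1}"
  have "Min ((\<lambda>n. \<bar>s - t n\<bar>) ` {1..N}) \<le> \<bar>s - t 1\<bar>"
    using N0 by (intro Min_le) auto
  also have "\<dots> \<le> 2"
  proof -
    have "t 1 \<in> {-1..1}" using tin N0 by auto
    then show ?thesis using s by auto
  qed
  finally show "Min ((\<lambda>n. \<bar>s - t n\<bar>) ` {1..N}) \<le> 2" .
qed

lemma fill_dist_nonneg: "0 \<le> fill_dist N t"
proof -
  have "0 \<le> Min ((\<lambda>n. \<bar>0 - t n\<bar>) ` {1..N})" using N0 by (subst Min_ge_iff) auto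
  also have "\<dots> \<le> fill_dist N t" unfolding fill_dist_def
    by (rule cSup_upper[OF imageI min_dist_bdd]) simp
  finally show ?thesis .
qed

lemma cell_dist_open:
  assumes n: "n \<in> {1..N}" and s: "s \<in> cell N t n" "s \<in> {-1<..<1}"
  shows "\<bar>s - t n\<bar> \<le> fill_dist N t"
proof -
  have "Min ((\<lambda>n. \<bar>s - t n\<bar>) ` {1..N}) = \<bar>s - t n\<bar>"
    using n s(1) by (intro Min_eqI) (auto simp: cell_def)
  moreover have "Min ((\<lambda>n. \<bar>s - t n\<bar>) ` {1..N}) \<le> fill_dist N t" unfolding fill_dist_def
    using s(2) by (intro cSup_upper min_dist_bdd) auto
  ultimately show ?thesis by simp
qed

lemma cell_length:
  assumes n: "n \<in> {1..N}" and ab: "cell N t n = {a..b}"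
  shows "b - a \<le> 2 * fill_dist N t" "a \<le> t n" "t n \<le> b"
proof -
  let ?h = "fill_dist N t"
  have tn: "t n \<in> {a..b}" using t_in_cell[of t n N] n tin ab by auto
  then show "a \<le> t n" "t n \<le> b" by auto
  have tn': "a \<le> t n" "t n \<le> b" using tn by auto
  have sub: "{a..b} \<subseteq> {-1..1}" using ab cell_subset by metis
  have h0: "0 \<le> ?h" by (rule fill_dist_nonneg)
  have "b - t n \<le> ?h"
  proof (rule ccontr)
    assume "\<not> b - t n \<le> ?h"
    define s where "s = t n + (?h + (b - t n)) / 2"
    have "a < s" using tn' h0 \<open>\<not> b - t n \<le> ?h\<close> unfolding s_def by (simp add: field_simps)
    have "s < b" using tn' h0 \<open>\<not> b - t n \<le> ?h\<close> unfolding s_def by (simp add: field_simps)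
    have "s \<in> cell N t n" "s \<in> {-1<..<1}" using \<open>a < s\<close> \<open>s < b\<close> sub ab by auto
    then have "\<bar>s - t n\<bar> \<le> ?h" using cell_dist_open n by blast
    then show False using \<open>\<not> b - t n \<le> ?h\<close> h0 unfolding s_def by auto
  qed
  moreover have "t n - a \<le> ?h"
  proof (rule ccontr)
    assume "\<not> t n - a \<le> ?h"
    define s where "s = t n - (?h + (t n - a)) / 2"
    have "a < s" using tn' h0 \<open>\<not> t n - a \<le> ?h\<close> unfolding s_def by (simp add: field_simps)
    have "s < b" using tn' h0 \<open>\<not> t n - a \<le> ?h\<close> unfolding s_def by (simp add: field_simps)
    have "s \<in> cell N t n" "s \<in> {-1<..<1}" using \<open>a < s\<close> \<open>s < b\<close> sub ab by auto
    then have "\<bar>s - t n\<bar> \<le> ?h" using cell_dist_open n by blast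
    then show False using \<open>\<not> t n - a \<le> ?h\<close> h0 unfolding s_def by auto
  qed
  ultimately show "b - a \<le> 2 * ?h" by simp
qed

lemma cell_cover:
  assumes "s \<in> {-1..1}"
  shows "\<exists>n\<in>{1..N}. s \<in> cell N t n"
proof -
  have "Min ((\<lambda>n. \<bar>s - t n\<bar>) ` {1..N}) \<in> (\<lambda>n. \<bar>s - t n\<bar>) ` {1..N}"
    using N0 by (intro Min_in) auto
  then obtain n where n: "n \<in> {1..N}" "Min ((\<lambda>n. \<bar>s - t n\<bar>) ` {1..N}) = \<bar>s - t n\<bar>" by auto
  have "\<forall>m\<in>{1..N}. \<bar>s - t n\<bar> \<le> \<bar>s - t m\<bar>"
    using n(2) by (metis (no_types, lifting) Min_le finite_atLeastAtMost finite_imageI image_eqI)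
  then show ?thesis using n(1) assms unfolding cell_def by auto
qed

lemma cell_disj:
  assumes inj: "inj_on t {1..N}" and nm: "n \<in> {1..N}" "m \<in> {1..N}" "n \<noteq> m"
    and s: "s \<in> cell N t n" "s \<in> cell N t m"
  shows "s = (t n + t m) / 2"
proof -
  have "\<bar>s - t n\<bar> \<le> \<bar>s - t m\<bar>" "\<bar>s - t m\<bar> \<le> \<bar>s - t n\<bar>" using s nm unfolding cell_def by auto
  then have "\<bar>s - t n\<bar> = \<bar>s - t m\<bar>" by linarith
  moreover have "t n \<noteq> t m" using inj nm by (meson inj_on_contraD)
  ultimately show ?thesis by (auto simp: abs_if split: if_splits)
qed

lemma cell_partition_integral:
  fixes g :: "real \<Rightarrow> real"
  assumes inj: "inj_on t {1..N}" and g: "g integrable_on {-1..1}"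
  shows "(\<Sum>n\<in>{1..N}. integral (cell N t n) g) = integral {-1..1} g"
proof -
  let ?Mid = "(\<lambda>(n,m). (t n + t m) / 2) ` ({1..N} \<times> {1..N})"
  have "(g has_integral integral (cell N t n) g) (cell N t n)" for n
  proof -
    obtain a b where ab: "cell N t n = {a..b}" using cell_interval by blast
    have "{a..b} \<subseteq> {-1..1}" using ab cell_subset by metis
    then have "g integrable_on {a..b}" using g
      by (metis box_real(2) integrable_on_subcbox)
    then show ?thesis using ab by (simp add: integrable_integral)
  qed
  then have "((\<lambda>x. if x \<in> cell N t n then g x else 0) has_integral integral (cell N t n) g) {-1..1}" for n
    using has_integral_restrict[OF cell_subset] by blast
  then have I: "((\<lambda>x. \<Sum>n\<in>{1..N}. if x \<in> cell N t n then g x else 0) has_integral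
      (\<Sum>n\<in>{1..N}. integral (cell N t n) g)) {-1..1}"
    by (intro has_integral_sum) auto
  have eq: "(\<Sum>n\<in>{1..N}. if x \<in> cell N t n then g x else 0) = g x" if x: "x \<in> {-1..1} - ?Mid" for x
  proof -
    obtain n0 where n0: "n0 \<in> {1..N}" "x \<in> cell N t n0" using cell_cover[of x] x by blast
    have "(\<Sum>n\<in>{1..N}. if x \<in> cell N t n then g x else 0) = (\<Sum>n\<in>{1..N}. if n = n0 then g x else 0)"
    proof (intro sum.cong refl)
      fix n assume n: "n \<in> {1..N}"
      show "(if x \<in> cell N t n then g x else 0) = (if n = n0 then g x else 0)"
      proof (cases "n = n0")
        case False
        have "x \<notin> cell N t n"
        proof
          assume "x \<in> cell N t n"
          then have "x = (t n + t n0) / 2" using cell_disj[OF inj n n0(1) False] n0 by blast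
          then have "x \<in> ?Mid" using n n0 by force
          then show False using x by blast
        qed
        then show ?thesis using False by simp
      qed (use n0 in simp)
    qed
    also have "\<dots> = g x" using n0 by simp
    finally show ?thesis .
  qed
  have "negligible ?Mid" by (intro negligible_finite) auto
  then have "(g has_integral (\<Sum>n\<in>{1..N}. integral (cell N t n) g)) {-1..1}"
    using has_integral_spike[OF _ _ I, of ?Mid g] eq by auto
  then show ?thesis by (simp add: integral_unique)
qed

lemma tau_eq:
  assumes n: "n \<in> {1..N}" and ab: "cell N t n = {a..b}"
  shows "tau N t n = (b - a) / 2"
proof -
  have "a \<le> b" using cell_length[OF n ab] by simp
  have "integral (voronoi N t n) (\<lambda>_. 1/2::real) = integral (cell N t n) (\<lambda>_. 1/2)"
  proof (rule integral_spike_set)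
    show "negligible {x \<in> voronoi N t n - cell N t n. (1/2::real) \<noteq> 0}"
      unfolding voronoi_eq by (rule negligible_subset[of "{}"]) auto
    have "{x \<in> cell N t n - voronoi N t n. (1/2::real) \<noteq> 0} \<subseteq> {-1, 1}"
      unfolding voronoi_eq using cell_subset by fastforce
    then show "negligible {x \<in> cell N t n - voronoi N t n. (1/2::real) \<noteq> 0}"
      by (rule negligible_subset[rotated]) auto
  qed
  also have "\<dots> = (b - a) / 2" unfolding ab using \<open>a \<le> b\<close>
    by (simp add: integral_const_real)
  finally show ?thesis unfolding tau_def .
qed

end


lemma young_ineq:
  fixes u v d \<delta> :: real
  assumes "0 < \<delta>" "\<delta> < 1" "0 \<le> u" "0 \<le> v" "0 \<le> d" "v \<le> u + d"
  shows "(1 - \<delta>) * v^2 \<le> u^2 + (1/\<delta> - 1) * d^2"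
proof -
  have "v^2 \<le> (u + d)^2" using assms by (intro power_mono) auto
  then have 1: "(1 - \<delta>) * v^2 \<le> (1 - \<delta>) * (u + d)^2" using assms by (intro mult_left_mono) auto
  have id: "u^2 + (1/\<delta> - 1) * d^2 - (1 - \<delta>) * (u + d)^2 = (\<delta> * u - (1 - \<delta>) * d)^2 / \<delta>"
    using assms by (simp add: field_simps power2_eq_square)
  have "0 \<le> (\<delta> * u - (1 - \<delta>) * d)^2 / \<delta>" using assms by simp
  then have "(1 - \<delta>) * (u + d)^2 \<le> u^2 + (1/\<delta> - 1) * d^2"
    using id by linarith
  with 1 show ?thesis by linarith
qed

lemma integral_sq_bound:
  fixes f :: "real \<Rightarrow> real"
  assumes "a \<le> b" "continuous_on {a..b} f"
  shows "(integral {a..b} f)^2 \<le> (b - a) * integral {a..b} (\<lambda>s. (f s)^2)"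
proof (cases "a = b")
  case True then show ?thesis by simp
next
  case False
  then have L: "b - a > 0" using assms by simp
  define I where "I = integral {a..b} f"
  define J where "J = integral {a..b} (\<lambda>s. (f s)^2)"
  define c where "c = I / (b - a)"
  have fI: "(f has_integral I) {a..b}" unfolding I_def
    using assms integrable_continuous_interval by (metis integrable_integral)
  have fJ: "((\<lambda>s. (f s)^2) has_integral J) {a..b}" unfolding J_def
    using assms by (intro integrable_integral integrable_continuous_interval continuous_intros)
  have "((\<lambda>s. (f s)^2 - 2 * c * f s + c^2) has_integral (J - 2 * c * I + (b - a) * c^2)) {a..b}"
    using has_integral_const_real[of "c^2" a b] assms
    by (intro has_integral_add has_integral_diff fJ has_integral_mult_right fI) auto
  moreover have "0 \<le> (f s)^2 - 2 * c * f s + c^2" for s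
  proof -
    have "(f s - c)^2 = (f s)^2 - 2 * c * f s + c^2" by (simp add: power2_diff algebra_simps)
    then show ?thesis by (metis zero_le_power2)
  qed
  ultimately have "0 \<le> J - 2 * c * I + (b - a) * c^2"
    by (rule has_integral_nonneg)
  also have "J - 2 * c * I + (b - a) * c^2 = J - I^2 / (b - a)"
  proof -
    have "(b - a) * c^2 = I^2 / (b - a)" unfolding c_def using L
      by (simp add: power2_eq_square)
    moreover have "2 * c * I = 2 * (I^2 / (b - a))" unfolding c_def
      by (simp add: power2_eq_square)
    ultimately show ?thesis by linarith
  qed
  finally have "I^2 / (b - a) \<le> J" by simp
  then show ?thesis unfolding I_def[symmetric] J_def[symmetric] using L
    by (simp add: field_simps)
qed


context
  fixes N :: nat and t :: "nat \<Rightarrow> real"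
  assumes N0: "0 < N" and tin: "\<forall>n\<in>{1..N}. t n \<in> {-1..1}" and inj: "inj_on t {1..N}"
begin

lemma cell_ineq:
  fixes K :: "int set" and a :: "int \<Rightarrow> complex" and \<delta> :: real
  assumes n: "n \<in> {1..N}" and ab: "cell N t n = {\<alpha>..\<beta>}" and d: "0 < \<delta>" "\<delta> < 1"
  defines "a' \<equiv> (\<lambda>j. a j * (\<i> * of_int j * of_real pi))"
  shows "(1 - \<delta>) * integral {\<alpha>..\<beta>} (\<lambda>s. (cmod (tp K a s))\<^sup>2)
          - (1/\<delta> - 1) * (4 * (fill_dist N t)\<^sup>2) * integral {\<alpha>..\<beta>} (\<lambda>s. (cmod (tp K a' s))\<^sup>2)
         \<le> (\<beta> - \<alpha>) * (cmod (tp K a (t n)))\<^sup>2"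
proof -
  let ?p = "tp K a" and ?q = "tp K a'" and ?h = "fill_dist N t"
  have len: "\<beta> - \<alpha> \<le> 2 * ?h" "\<alpha> \<le> t n" "t n \<le> \<beta>"
    using cell_length[OF N0 tin n ab] by auto
  define L where "L = \<beta> - \<alpha>"
  have L0: "0 \<le> L" using len unfolding L_def by simp
  define I where "I = integral {\<alpha>..\<beta>} (\<lambda>s. cmod (?q s))"
  define J where "J = integral {\<alpha>..\<beta>} (\<lambda>s. (cmod (?q s))\<^sup>2)"
  have deriv: "\<And>x S. (?p has_vector_derivative ?q x) (at x within S)"
    unfolding a'_def by (rule tp_deriv)
  have cq: "continuous_on S (\<lambda>s. cmod (?q s))" for S
    by (intro continuous_intros continuous_on_tp)
  have I0: "0 \<le> I" unfolding I_def by (rule integral_nonneg) (auto intro: integrable_continuous_interval cq)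
  have J0: "0 \<le> J" unfolding J_def by (rule integral_nonneg) (auto intro!: integrable_continuous_interval continuous_intros cq)
  have diff: "cmod (?p (t n) - ?p s) \<le> I" if s: "s \<in> {\<alpha>..\<beta>}" for s
  proof -
    have key: "cmod (?p y - ?p x) \<le> I" if xy: "x \<le> y" "x \<in> {\<alpha>..\<beta>}" "y \<in> {\<alpha>..\<beta>}" for x y
    proof -
      have "(?q has_integral ?p y - ?p x) {x..y}"
        using xy(1) by (intro fundamental_theorem_of_calculus) (auto intro: deriv)
      then have "cmod (?p y - ?p x) = norm (integral {x..y} ?q)" by (simp add: integral_unique)
      also have "\<dots> \<le> integral {x..y} (\<lambda>s. cmod (?q s))"
        by (intro integral_norm_bound_integral integrable_continuous_interval cq continuous_on_tp) auto
      also have "\<dots> \<le> I" unfolding I_def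
        using xy by (intro integral_subset_le integrable_continuous_interval cq) auto
      finally show ?thesis .
    qed
    show ?thesis
    proof (cases "s \<le> t n")
      case True then show ?thesis using key[of s "t n"] s len by auto
    next
      case False then show ?thesis using key[of "t n" s] s len by (auto simp: norm_minus_commute)
    qed
  qed
  have IJ: "I\<^sup>2 \<le> L * J" unfolding I_def J_def L_def
    using len by (intro integral_sq_bound cq) auto
  have pw: "(1 - \<delta>) * (cmod (?p s))\<^sup>2 - (1/\<delta> - 1) * I\<^sup>2 \<le> (cmod (?p (t n)))\<^sup>2" if s: "s \<in> {\<alpha>..\<beta>}" for s
  proof -
    have "cmod (?p s) = cmod (?p (t n) - (?p (t n) - ?p s))" by simp
    also have "\<dots> \<le> cmod (?p (t n)) + cmod (?p (t n) - ?p s)" by (rule norm_triangle_ineq4)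
    finally have "cmod (?p s) \<le> cmod (?p (t n)) + cmod (?p (t n) - ?p s)" .
    then have "cmod (?p s) \<le> cmod (?p (t n)) + I" using diff[OF s] by linarith
    then show ?thesis using young_ineq[OF d, of "cmod (?p (t n))" "cmod (?p s)" I] I0 by auto
  qed
  have cp: "continuous_on S (\<lambda>s. (cmod (?p s))\<^sup>2)" for S
    by (intro continuous_intros continuous_on_tp)
  have cI: "((\<lambda>s. (1/\<delta> - 1) * I\<^sup>2) has_integral L * ((1/\<delta> - 1) * I\<^sup>2)) {\<alpha>..\<beta>}"
    unfolding L_def using has_integral_const_real[of "(1/\<delta> - 1) * I\<^sup>2" \<alpha> \<beta>] len by simp
  have "((\<lambda>s. (1 - \<delta>) * (cmod (?p s))\<^sup>2 - (1/\<delta> - 1) * I\<^sup>2) has_integral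
          ((1 - \<delta>) * integral {\<alpha>..\<beta>} (\<lambda>s. (cmod (?p s))\<^sup>2) - L * ((1/\<delta> - 1) * I\<^sup>2))) {\<alpha>..\<beta>}"
    by (intro has_integral_diff has_integral_mult_right integrable_integral integrable_continuous_interval cp cI)
  moreover have "((\<lambda>s. (cmod (?p (t n)))\<^sup>2) has_integral L * (cmod (?p (t n)))\<^sup>2) {\<alpha>..\<beta>}"
    unfolding L_def using has_integral_const_real[of "(cmod (?p (t n)))\<^sup>2" \<alpha> \<beta>] len by simp
  ultimately have main: "(1 - \<delta>) * integral {\<alpha>..\<beta>} (\<lambda>s. (cmod (?p s))\<^sup>2) - L * ((1/\<delta> - 1) * I\<^sup>2)
      \<le> L * (cmod (?p (t n)))\<^sup>2"
    by (rule has_integral_le) (use pw in auto)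
  have c0: "0 \<le> 1/\<delta> - 1" using d by (simp add: field_simps)
  have "L * I\<^sup>2 \<le> L * (L * J)" using IJ L0 by (intro mult_left_mono) auto
  also have "\<dots> = L\<^sup>2 * J" by (simp add: power2_eq_square)
  also have "\<dots> \<le> (4 * ?h\<^sup>2) * J"
  proof -
    have "L\<^sup>2 \<le> (2 * ?h)\<^sup>2" using L0 len unfolding L_def by (intro power_mono) auto
    then show ?thesis using J0 by (intro mult_right_mono) (auto simp: power_mult_distrib)
  qed
  finally have fin: "(1/\<delta> - 1) * (L * I\<^sup>2) \<le> (1/\<delta> - 1) * ((4 * ?h\<^sup>2) * J)"
    using c0 by (intro mult_left_mono) auto
  have e1: "L * ((1/\<delta> - 1) * I\<^sup>2) = (1/\<delta> - 1) * (L * I\<^sup>2)" by (simp only: mult_ac)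
  have e2: "(1/\<delta> - 1) * ((4 * ?h\<^sup>2) * J) = (1/\<delta> - 1) * (4 * ?h\<^sup>2) * J" by (simp only: mult_ac)
  have "(1 - \<delta>) * integral {\<alpha>..\<beta>} (\<lambda>s. (cmod (?p s))\<^sup>2) - (1/\<delta> - 1) * (4 * ?h\<^sup>2) * J
         \<le> L * (cmod (?p (t n)))\<^sup>2"
    using main fin e1 e2 by linarith
  then show ?thesis unfolding J_def L_def .
qed


lemma mz_bound:
  fixes M :: nat and a :: "int \<Rightarrow> complex" and \<delta> :: real
  assumes d: "0 < \<delta>" "\<delta> < 1"
  shows "((1 - \<delta>) - (1/\<delta> - 1) * (4 * (fill_dist N t)\<^sup>2) * (pi\<^sup>2 * (real M)\<^sup>2))
            * (\<Sum>j\<in>{- int M..<int M}. (cmod (a j))\<^sup>2)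
         \<le> (\<Sum>n\<in>{1..N}. tau N t n * (cmod (tp {- int M..<int M} a (t n)))\<^sup>2)"
proof -
  define K where "K = {- int M..<int M}"
  define a' where "a' = (\<lambda>j. a j * (\<i> * of_int j * of_real pi))"
  define C where "C = (1/\<delta> - 1) * (4 * (fill_dist N t)\<^sup>2)"
  define S where "S = (\<Sum>j\<in>K. (cmod (a j))\<^sup>2)"
  define S' where "S' = (\<Sum>j\<in>K. (cmod (a' j))\<^sup>2)"
  have C0: "0 \<le> C" unfolding C_def using d by (intro mult_nonneg_nonneg) (auto simp: field_simps)
  have fK: "finite K" unfolding K_def by simp
  have per: "(1 - \<delta>) * integral (cell N t n) (\<lambda>s. (cmod (tp K a s))\<^sup>2)
          - C * integral (cell N t n) (\<lambda>s. (cmod (tp K a' s))\<^sup>2)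
         \<le> 2 * (tau N t n * (cmod (tp K a (t n)))\<^sup>2)" if n: "n \<in> {1..N}" for n
  proof -
    obtain \<alpha> \<beta> where ab: "cell N t n = {\<alpha>..\<beta>}" using cell_interval by blast
    have "tau N t n = (\<beta> - \<alpha>) / 2" using tau_eq[OF N0 tin n ab] .
    then have e: "2 * (tau N t n * (cmod (tp K a (t n)))\<^sup>2) = (\<beta> - \<alpha>) * (cmod (tp K a (t n)))\<^sup>2"
      by simp
    show ?thesis unfolding e ab C_def a'_def using cell_ineq[OF n ab d, of K a] by linarith
  qed
  have int_p: "(\<lambda>s. (cmod (tp K b s))\<^sup>2) integrable_on {-1..1}" for b
    by (intro integrable_continuous_interval continuous_intros continuous_on_tp)
  have "(\<Sum>n\<in>{1..N}. (1 - \<delta>) * integral (cell N t n) (\<lambda>s. (cmod (tp K a s))\<^sup>2)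
          - C * integral (cell N t n) (\<lambda>s. (cmod (tp K a' s))\<^sup>2))
        = (1 - \<delta>) * integral {-1..1} (\<lambda>s. (cmod (tp K a s))\<^sup>2) - C * integral {-1..1} (\<lambda>s. (cmod (tp K a' s))\<^sup>2)"
    by (simp add: sum_subtractf flip: sum_distrib_left cell_partition_integral[OF N0 tin inj int_p])
  also have "\<dots> = (1 - \<delta>) * (2 * S) - C * (2 * S')"
    using tp_norm_sq_integral[OF fK, of a] tp_norm_sq_integral[OF fK, of a'] unfolding S_def S'_def
    by (simp add: integral_unique)
  finally have sumeq: "(\<Sum>n\<in>{1..N}. (1 - \<delta>) * integral (cell N t n) (\<lambda>s. (cmod (tp K a s))\<^sup>2)
          - C * integral (cell N t n) (\<lambda>s. (cmod (tp K a' s))\<^sup>2)) = (1 - \<delta>) * (2 * S) - C * (2 * S')" .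
  have "(1 - \<delta>) * (2 * S) - C * (2 * S') \<le> (\<Sum>n\<in>{1..N}. 2 * (tau N t n * (cmod (tp K a (t n)))\<^sup>2))"
    unfolding sumeq[symmetric] by (rule sum_mono) (rule per)
  also have "\<dots> = 2 * (\<Sum>n\<in>{1..N}. tau N t n * (cmod (tp K a (t n)))\<^sup>2)" by (simp add: sum_distrib_left)
  finally have A: "(1 - \<delta>) * S - C * S' \<le> (\<Sum>n\<in>{1..N}. tau N t n * (cmod (tp K a (t n)))\<^sup>2)" by simp
  have "S' \<le> (\<Sum>j\<in>K. (cmod (a j))\<^sup>2 * (pi\<^sup>2 * (real M)\<^sup>2))" unfolding S'_def
  proof (rule sum_mono)
    fix j assume j: "j \<in> K"
    have jM: "\<bar>real_of_int j\<bar> \<le> real M" using j unfolding K_def by auto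
    have "(cmod (a' j))\<^sup>2 = (cmod (a j))\<^sup>2 * (pi\<^sup>2 * (real_of_int j)\<^sup>2)"
      unfolding a'_def by (simp add: norm_mult power_mult_distrib)
    also have "\<dots> \<le> (cmod (a j))\<^sup>2 * (pi\<^sup>2 * (real M)\<^sup>2)"
    proof -
      have "(real_of_int j)\<^sup>2 \<le> (real M)\<^sup>2" using jM by (metis abs_le_square_iff abs_of_nat)
      then show ?thesis by (intro mult_left_mono) auto
    qed
    finally show "(cmod (a' j))\<^sup>2 \<le> (cmod (a j))\<^sup>2 * (pi\<^sup>2 * (real M)\<^sup>2)" .
  qed
  also have "\<dots> = S * (pi\<^sup>2 * (real M)\<^sup>2)" unfolding S_def by (simp add: sum_distrib_right)
  finally have "C * S' \<le> C * (S * (pi\<^sup>2 * (real M)\<^sup>2))" using C0 by (intro mult_left_mono) auto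
  with A have "(1 - \<delta>) * S - C * (S * (pi\<^sup>2 * (real M)\<^sup>2)) \<le> (\<Sum>n\<in>{1..N}. tau N t n * (cmod (tp K a (t n)))\<^sup>2)"
    by linarith
  then show ?thesis unfolding C_def S_def K_def by (simp add: algebra_simps)
qed

end


definition Uz :: "(nat \<Rightarrow> int \<Rightarrow> complex) \<Rightarrow> int set \<Rightarrow> (int \<Rightarrow> complex) \<Rightarrow> nat \<Rightarrow> complex" where
  "Uz U K z n = (\<Sum>j\<in>K. U n j * z j)"

definition NE :: "(nat \<Rightarrow> int \<Rightarrow> complex) \<Rightarrow> nat set \<Rightarrow> int set \<Rightarrow> (int \<Rightarrow> complex) \<Rightarrow> (nat \<Rightarrow> complex) \<Rightarrow> bool" where
  "NE U R K z y \<longleftrightarrow> (\<forall>j\<in>K. (\<Sum>n\<in>R. cnj (U n j) * (Uz U K z n - y n)) = 0)"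

lemma Uz_swap:
  "(\<Sum>n\<in>R. cnj (Uz U K w n) * v n) = (\<Sum>j\<in>K. cnj (w j) * (\<Sum>n\<in>R. cnj (U n j) * v n))"
  unfolding Uz_def cnj_sum sum_distrib_left sum_distrib_right
  by (subst sum.swap) (simp add: algebra_simps)

lemma Uz_NE_orth:
  assumes "NE U R K z y"
  shows "(\<Sum>n\<in>R. cnj (Uz U K w n) * (Uz U K z n - y n)) = 0"
  using assms unfolding Uz_swap NE_def by simp

lemma Uz_insert:
  assumes "finite K" "k \<notin> K"
  shows "Uz U (insert k K) z n = U n k * z k + Uz U K z n"
  using assms unfolding Uz_def by simp

lemma Uz_linear: "Uz U K (\<lambda>j. a * z j + b * w j) n = a * Uz U K z n + b * Uz U K w n"
  unfolding Uz_def by (simp add: sum.distrib sum_distrib_left algebra_simps)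

lemma Uz_diff: "Uz U K (\<lambda>j. z j - w j) n = Uz U K z n - Uz U K w n"
  unfolding Uz_def by (simp add: sum_subtractf algebra_simps)

lemma ne_exists:
  assumes fR: "finite R" and "finite K"
  shows "\<exists>z. (\<forall>j. j \<notin> K \<longrightarrow> z j = 0) \<and> NE U R K z y"
  using assms(2)
proof (induction K arbitrary: y rule: finite_induct)
  case empty
  show ?case by (rule exI[of _ "\<lambda>_. 0"]) (simp add: NE_def)
next
  case (insert k K)
  obtain z0 where z0: "\<forall>j. j \<notin> K \<longrightarrow> z0 j = 0" "NE U R K z0 y" using insert.IH by blast
  obtain z1 where z1: "\<forall>j. j \<notin> K \<longrightarrow> z1 j = 0" "NE U R K z1 (\<lambda>n. U n k)" using insert.IH by blast
  have z0k: "z0 k = 0" "z1 k = 0" using z0 z1 insert.hyps by auto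
  define r where "r n = U n k - Uz U K z1 n" for n
  have rorth: "(\<Sum>n\<in>R. cnj (U n j) * r n) = 0" if j: "j \<in> K" for j
  proof -
    have "(\<Sum>n\<in>R. cnj (U n j) * r n) = - (\<Sum>n\<in>R. cnj (U n j) * (Uz U K z1 n - U n k))"
      unfolding r_def by (simp add: sum_negf[symmetric] algebra_simps)
    then show ?thesis using z1(2) j unfolding NE_def by simp
  qed
  define S where "S = (\<Sum>n\<in>R. cnj (r n) * r n)"
  have UzI: "Uz U (insert k K) w n = U n k * w k + Uz U K w n" for w n
    using Uz_insert[OF insert.hyps] .
  show ?case
  proof (cases "S = 0")
    case True
    have eqS: "(\<Sum>n\<in>R. cnj (r n) * r n) = complex_of_real (\<Sum>n\<in>R. (cmod (r n))\<^sup>2)"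
      unfolding of_real_sum complex_norm_square by (simp add: mult.commute)
    have "(\<Sum>n\<in>R. (cmod (r n))\<^sup>2) = 0" using eqS True unfolding S_def by (metis of_real_eq_0_iff)
    then have r0: "\<forall>n\<in>R. r n = 0"
      using fR by (auto simp: sum_nonneg_eq_0_iff)
    show ?thesis
    proof (rule exI[of _ z0], intro conjI allI impI)
      fix j assume "j \<notin> insert k K" then show "z0 j = 0" using z0 by auto
    next
      have Uz0: "Uz U (insert k K) z0 n = Uz U K z0 n" for n using UzI z0k by simp
      show "NE U R (insert k K) z0 y" unfolding NE_def
      proof
        fix j assume "j \<in> insert k K"
        then consider "j = k" | "j \<in> K" by auto
        then show "(\<Sum>n\<in>R. cnj (U n j) * (Uz U (insert k K) z0 n - y n)) = 0"
        proof cases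
          case 1
          have "(\<Sum>n\<in>R. cnj (U n k) * (Uz U K z0 n - y n)) = (\<Sum>n\<in>R. cnj (Uz U K z1 n) * (Uz U K z0 n - y n))"
            using r0 unfolding r_def by (intro sum.cong refl) auto
          also have "\<dots> = 0" by (rule Uz_NE_orth[OF z0(2)])
          finally show ?thesis using 1 Uz0 by simp
        next
          case 2 then show ?thesis using z0(2) Uz0 unfolding NE_def by simp
        qed
      qed
    qed
  next
    case False
    define \<sigma> where "\<sigma> = (\<Sum>n\<in>R. cnj (r n) * (y n - Uz U K z0 n))"
    define c where "c = \<sigma> / S"
    define z where "z j = z0 j + c * ((if j = k then 1 else 0) - z1 j)" for j
    have zK: "Uz U K z n = Uz U K z0 n - c * Uz U K z1 n" for n
    proof -
      have "Uz U K z n = Uz U K (\<lambda>j. 1 * z0 j + (- c) * z1 j) n"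
        unfolding Uz_def z_def using insert.hyps by (intro sum.cong refl) (auto simp: algebra_simps)
      then show ?thesis unfolding Uz_linear by simp
    qed
    have zk: "z k = c" unfolding z_def using z0k by simp
    have Uzz: "Uz U (insert k K) z n = Uz U K z0 n + c * r n" for n
      unfolding UzI zK zk r_def by (simp add: algebra_simps)
    have orthK: "(\<Sum>n\<in>R. cnj (U n j) * (Uz U K z0 n + c * r n - y n)) = 0" if j: "j \<in> K" for j
    proof -
      have "(\<Sum>n\<in>R. cnj (U n j) * (Uz U K z0 n + c * r n - y n))
          = (\<Sum>n\<in>R. cnj (U n j) * (Uz U K z0 n - y n) + c * (cnj (U n j) * r n))"
        by (intro sum.cong refl) (simp add: algebra_simps)
      also have "\<dots> = (\<Sum>n\<in>R. cnj (U n j) * (Uz U K z0 n - y n)) + c * (\<Sum>n\<in>R. cnj (U n j) * r n)"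
        by (simp add: sum.distrib sum_distrib_left)
      finally have "(\<Sum>n\<in>R. cnj (U n j) * (Uz U K z0 n + c * r n - y n))
          = (\<Sum>n\<in>R. cnj (U n j) * (Uz U K z0 n - y n)) + c * (\<Sum>n\<in>R. cnj (U n j) * r n)" .
      then show ?thesis using z0(2) j rorth[OF j] unfolding NE_def by simp
    qed
    show ?thesis
    proof (rule exI[of _ z], intro conjI allI impI)
      fix j assume "j \<notin> insert k K" then show "z j = 0" using z0 z1 unfolding z_def by auto
    next
      show "NE U R (insert k K) z y" unfolding NE_def Uzz
      proof
        fix j assume "j \<in> insert k K"
        then consider "j = k" | "j \<in> K" by auto
        then show "(\<Sum>n\<in>R. cnj (U n j) * (Uz U K z0 n + c * r n - y n)) = 0"
        proof cases
          case 2 then show ?thesis by (rule orthK)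
        next
          case 1
          have A: "(\<Sum>n\<in>R. cnj (Uz U K z1 n) * (Uz U K z0 n + c * r n - y n)) = 0"
            unfolding Uz_swap using orthK by simp
          have B: "(\<Sum>n\<in>R. cnj (r n) * (Uz U K z0 n + c * r n - y n)) = c * S - \<sigma>"
            unfolding S_def \<sigma>_def
            by (simp add: sum.distrib sum_distrib_left sum_subtractf algebra_simps)
          have "c * S = \<sigma>" unfolding c_def using False by simp
          then have B': "(\<Sum>n\<in>R. cnj (r n) * (Uz U K z0 n + c * r n - y n)) = 0" using B by simp
          have "(\<Sum>n\<in>R. cnj (U n k) * (Uz U K z0 n + c * r n - y n))
              = (\<Sum>n\<in>R. cnj (r n) * (Uz U K z0 n + c * r n - y n))
                + (\<Sum>n\<in>R. cnj (Uz U K z1 n) * (Uz U K z0 n + c * r n - y n))"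
            unfolding r_def by (simp add: sum.distrib[symmetric] algebra_simps)
          then show ?thesis using A B' 1 by simp
        qed
      qed
    qed
  qed
qed

lemma ne_pythagoras:
  assumes "NE U R K z y"
  shows "(\<Sum>n\<in>R. (cmod (Uz U K z' n - y n))\<^sup>2)
       = (\<Sum>n\<in>R. (cmod (Uz U K z n - y n))\<^sup>2) + (\<Sum>n\<in>R. (cmod (Uz U K (\<lambda>j. z' j - z j) n))\<^sup>2)"
proof -
  define A where "A n = Uz U K (\<lambda>j. z' j - z j) n" for n
  define B where "B n = Uz U K z n - y n" for n
  have e: "Uz U K z' n - y n = A n + B n" for n
    unfolding A_def B_def Uz_diff by simp
  have o1: "(\<Sum>n\<in>R. cnj (A n) * B n) = 0" unfolding A_def B_def by (rule Uz_NE_orth[OF assms])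
  have o2: "(\<Sum>n\<in>R. A n * cnj (B n)) = 0"
  proof -
    have "(\<Sum>n\<in>R. A n * cnj (B n)) = cnj (\<Sum>n\<in>R. cnj (A n) * B n)" by (simp add: cnj_sum mult.commute)
    then show ?thesis using o1 by simp
  qed
  have "complex_of_real (\<Sum>n\<in>R. (cmod (A n + B n))\<^sup>2)
       = (\<Sum>n\<in>R. (A n + B n) * cnj (A n + B n))"
    unfolding of_real_sum complex_norm_square ..
  also have "\<dots> = (\<Sum>n\<in>R. B n * cnj (B n)) + (\<Sum>n\<in>R. A n * cnj (A n))
        + (\<Sum>n\<in>R. cnj (A n) * B n) + (\<Sum>n\<in>R. A n * cnj (B n))"
    by (simp add: sum.distrib[symmetric] algebra_simps)
  also have "\<dots> = complex_of_real ((\<Sum>n\<in>R. (cmod (B n))\<^sup>2) + (\<Sum>n\<in>R. (cmod (A n))\<^sup>2))"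
    unfolding of_real_add of_real_sum complex_norm_square using o1 o2 by simp
  finally show ?thesis unfolding e A_def[symmetric] B_def[symmetric] using of_real_eq_iff by blast
qed


lemma infsum_diff':
  fixes f g :: "'a \<Rightarrow> complex"
  assumes "f summable_on A" "g summable_on A"
  shows "(\<Sum>\<^sub>\<infinity>x\<in>A. f x - g x) = infsum f A - infsum g A"
proof -
  have s: "(\<lambda>x. - g x) summable_on A" using assms(2) summable_on_uminus by blast
  have "(\<Sum>\<^sub>\<infinity>x\<in>A. f x + - g x) = infsum f A + infsum (\<lambda>x. - g x) A"
    by (rule infsum_add[OF assms(1) s])
  then show ?thesis by (simp add: infsum_uminus)
qed

lemma tail_sup:
  fixes x :: "int \<Rightarrow> complex" and w :: "int \<Rightarrow> real" and M :: nat
  assumes xs: "(\<lambda>j. cmod (x j)) summable_on UNIV" and w1: "\<forall>i. 1 \<le> w i"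
    and ws: "(\<lambda>i. w i * cmod (x i - projM M x i)) summable_on UNIV"
  shows "cmod ((\<Sum>\<^sub>\<infinity>j. x j * fourier j s) - tp {- int M..<int M} (projM M x) s)
         \<le> wl1norm w (\<lambda>j. x j - projM M x j)"
proof -
  define K where "K = {- int M..<int M}"
  define zt where "zt j = x j - projM M x j" for j
  have ztle: "cmod (zt j) \<le> cmod (x j)" for j unfolding zt_def projM_def by auto
  have pxle: "cmod (projM M x j) \<le> cmod (x j)" for j unfolding projM_def by auto
  have s1: "(\<lambda>j. x j * fourier j s) summable_on UNIV"
    by (rule Infinite_Sum.abs_summable_summable, rule Infinite_Sum.abs_summable_on_comparison_test'[OF xs]) (simp add: norm_mult)
  have s2: "(\<lambda>j. projM M x j * fourier j s) summable_on UNIV"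
    by (rule Infinite_Sum.abs_summable_summable, rule Infinite_Sum.abs_summable_on_comparison_test'[OF xs]) (simp add: norm_mult pxle)
  have s3: "(\<lambda>j. norm (zt j * fourier j s)) summable_on UNIV"
    by (rule Infinite_Sum.abs_summable_on_comparison_test'[OF xs]) (simp add: norm_mult ztle)
  have s4: "(\<lambda>j. cmod (zt j)) summable_on UNIV"
    using Infinite_Sum.abs_summable_on_comparison_test'[OF xs, of zt] ztle by simp
  have tpe: "tp K (projM M x) s = (\<Sum>\<^sub>\<infinity>j. projM M x j * fourier j s)"
  proof -
    have "(\<Sum>\<^sub>\<infinity>j. projM M x j * fourier j s) = (\<Sum>\<^sub>\<infinity>j\<in>K. projM M x j * fourier j s)"
      by (rule infsum_cong_neutral) (auto simp: projM_def K_def)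
    also have "\<dots> = tp K (projM M x) s" unfolding tp_def K_def by (simp add: infsum_finite)
    finally show ?thesis by simp
  qed
  have "(\<Sum>\<^sub>\<infinity>j. x j * fourier j s) - tp K (projM M x) s = (\<Sum>\<^sub>\<infinity>j. zt j * fourier j s)"
    unfolding tpe zt_def using infsum_diff'[OF s1 s2] by (simp add: algebra_simps)
  then have "cmod ((\<Sum>\<^sub>\<infinity>j. x j * fourier j s) - tp K (projM M x) s) \<le> (\<Sum>\<^sub>\<infinity>j. cmod (zt j * fourier j s))"
    using norm_infsum_bound[OF s3] by simp
  also have "\<dots> = (\<Sum>\<^sub>\<infinity>j. cmod (zt j))" by (simp add: norm_mult)
  also have "\<dots> \<le> (\<Sum>\<^sub>\<infinity>j. w j * cmod (zt j))"
  proof -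
    have "cmod (zt j) \<le> w j * cmod (zt j)" for j
      using mult_right_mono[of 1 "w j" "cmod (zt j)"] w1 by simp
    then show ?thesis using ws unfolding zt_def[symmetric] by (intro infsum_mono s4) auto
  qed
  finally show ?thesis unfolding wl1norm_def zt_def K_def .
qed

lemma tail_l2:
  fixes x :: "int \<Rightarrow> complex" and w :: "int \<Rightarrow> real" and M :: nat
  assumes w1: "\<forall>i. 1 \<le> w i"
    and ws: "(\<lambda>i. w i * cmod (z i)) summable_on UNIV"
  shows "(\<lambda>j. (cmod (z j))\<^sup>2) summable_on UNIV \<and> (\<Sum>\<^sub>\<infinity>j. (cmod (z j))\<^sup>2) \<le> (wl1norm w z)\<^sup>2"
proof -
  define W where "W = wl1norm w z"
  have wz: "cmod (z j) \<le> w j * cmod (z j)" for j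
    using mult_right_mono[of 1 "w j" "cmod (z j)"] w1 by simp
  have wz0: "0 \<le> w j * cmod (z j)" for j using w1 by (metis dual_order.trans norm_ge_zero wz)
  have single: "w j * cmod (z j) \<le> W" for j
  proof -
    have "sum (\<lambda>i. w i * cmod (z i)) {j} \<le> W" unfolding W_def wl1norm_def
      by (rule finite_sum_le_infsum[OF ws]) (auto intro: wz0)
    then show ?thesis by simp
  qed
  have pt: "(cmod (z j))\<^sup>2 \<le> W * (w j * cmod (z j))" for j
  proof -
    have "(cmod (z j))\<^sup>2 = cmod (z j) * cmod (z j)" by (simp add: power2_eq_square)
    also have "\<dots> \<le> W * cmod (z j)" using wz single by (intro mult_right_mono) (auto intro: order.trans)
    also have "\<dots> \<le> W * (w j * cmod (z j))"
    proof -
      have "0 \<le> W" using single wz0 by (meson order.trans)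
      then show ?thesis using wz by (intro mult_left_mono) auto
    qed
    finally show ?thesis .
  qed
  have sW: "(\<lambda>j. W * (w j * cmod (z j))) summable_on UNIV" by (intro summable_on_cmult_right ws)
  have s: "(\<lambda>j. (cmod (z j))\<^sup>2) summable_on UNIV"
    by (rule summable_on_comparison_test[OF sW]) (auto intro: pt)
  have "(\<Sum>\<^sub>\<infinity>j. (cmod (z j))\<^sup>2) \<le> (\<Sum>\<^sub>\<infinity>j. W * (w j * cmod (z j)))"
    by (intro infsum_mono s sW pt)
  also have "\<dots> = W * W" unfolding infsum_cmult_right' W_def wl1norm_def ..
  finally show ?thesis using s unfolding W_def by (simp add: power2_eq_square)
qed


lemma main_thm:
  fixes \<epsilon> :: real and M N :: nat and t :: "nat \<Rightarrow> real" and x :: "int \<Rightarrow> complex"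
    and e :: "nat \<Rightarrow> complex" and \<eta> :: real
  assumes e0: "0 < \<epsilon>" "\<epsilon> < 1"
    and M0: "0 < M" and N0: "0 < N" and inj: "inj_on t {1..N}" and tin: "\<forall>n\<in>{1..N}. t n \<in> {-1..1}"
    and fd: "fill_dist N t \<le> (\<epsilon> / (4 * pi)) / real M"
    and xs: "(\<lambda>j. cmod (x j)) summable_on UNIV"
    and eb: "\<forall>n\<in>{1..N}. cmod (e n) \<le> \<eta>"
  defines "y \<equiv> (\<lambda>n. complex_of_real (sqrt (tau N t n)) * ((\<Sum>\<^sub>\<infinity>j. x j * fourier j (t n)) + e n))"
  shows "\<exists>xc. ((\<forall>j. j \<notin> {- int M..<int M} \<longrightarrow> xc j = 0) \<and>
                        (\<forall>z'. (\<forall>j. j \<notin> {- int M..<int M} \<longrightarrow> z' j = 0) \<longrightarrow>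
                               lsq_residual N t M y xc \<le> lsq_residual N t M y z')) \<and>
           (\<forall>z. ((\<forall>j. j \<notin> {- int M..<int M} \<longrightarrow> z j = 0) \<and>
                        (\<forall>z'. (\<forall>j. j \<notin> {- int M..<int M} \<longrightarrow> z' j = 0) \<longrightarrow>
                               lsq_residual N t M y z \<le> lsq_residual N t M y z')) \<longrightarrow> z = xc) \<and>
           (\<forall>w::int \<Rightarrow> real. (\<forall>i. 1 \<le> w i) \<and>
                (\<lambda>i. w i * cmod ((\<lambda>j. x j - projM M x j) i)) summable_on UNIV \<longrightarrow>
              l2norm (\<lambda>j. x j - xc j)
                \<le> (1 + 1 / sqrt (1 - \<epsilon>)) * wl1norm w (\<lambda>j. x j - projM M x j)
                  + \<eta> / sqrt (1 - \<epsilon>))"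
proof -
  define K where "K = {- int M..<int M}"
  define R where "R = {1..N}"
  define U where "U = Umat N t"
  have fK: "finite K" and fR: "finite R" unfolding K_def R_def by auto
  have tau0: "0 \<le> tau N t n" if n: "n \<in> R" for n
  proof -
    obtain a b where ab: "cell N t n = {a..b}" using cell_interval by blast
    show ?thesis using tau_eq[OF N0 tin _ ab] cell_length[OF N0 tin _ ab] n unfolding R_def by auto
  qed
  have tausum: "(\<Sum>n\<in>R. tau N t n) = 1"
  proof -
    have "tau N t n = integral (cell N t n) (\<lambda>_. 1/2)" if n: "n \<in> R" for n
    proof -
      obtain a b where ab: "cell N t n = {a..b}" using cell_interval by blast
      have "a \<le> b" using cell_length[OF N0 tin _ ab] n unfolding R_def by auto
      then show ?thesis using tau_eq[OF N0 tin _ ab] n unfolding R_def ab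
        by (simp add: integral_const_real)
    qed
    then have "(\<Sum>n\<in>R. tau N t n) = (\<Sum>n\<in>R. integral (cell N t n) (\<lambda>_. 1/2::real))"
      by (rule sum.cong[OF refl])
    also have "\<dots> = integral {-1..1::real} (\<lambda>_. 1/2::real)"
    proof -
      have ic: "(\<lambda>_. 1/2::real) integrable_on {-1..1::real}" by (intro integrable_continuous_interval continuous_intros)
      note X = cell_partition_integral[OF N0 tin inj ic]
      show ?thesis unfolding R_def by (rule X)
    qed
    also have "\<dots> = 1" by (simp add: integral_const_real)
    finally show ?thesis .
  qed
  have UzU: "Uz U K z n = complex_of_real (sqrt (tau N t n)) * tp K z (t n)" for z n
    unfolding Uz_def U_def Umat_def tp_def by (simp add: sum_distrib_left mult_ac)
  have normsq: "(cmod (Uz U K z n))\<^sup>2 = tau N t n * (cmod (tp K z (t n)))\<^sup>2" if n: "n \<in> R" for z n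
    unfolding UzU using tau0[OF n] by (simp add: norm_mult power_mult_distrib)
  have coef: "1 - \<epsilon> \<le> (1 - \<epsilon>/2) - (1/(\<epsilon>/2) - 1) * (4 * (fill_dist N t)\<^sup>2) * (pi\<^sup>2 * (real M)\<^sup>2)"
  proof -
    define h where "h = fill_dist N t"
    have h0: "0 \<le> h" unfolding h_def by (rule fill_dist_nonneg[OF N0 tin])
    have hM: "h * real M \<le> \<epsilon> / (4 * pi)" using fd M0 unfolding h_def by (simp add: field_simps)
    have hM2: "(h * real M)\<^sup>2 \<le> (\<epsilon> / (4 * pi))\<^sup>2" using hM h0 by (intro power_mono) auto
    have A: "(4 * h\<^sup>2) * (pi\<^sup>2 * (real M)\<^sup>2) = 4 * pi\<^sup>2 * (h * real M)\<^sup>2" by (simp add: power_mult_distrib)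
    have B: "4 * pi\<^sup>2 * (\<epsilon> / (4 * pi))\<^sup>2 = \<epsilon>\<^sup>2 / 4" by (simp add: power2_eq_square field_simps)
    have C: "(4 * h\<^sup>2) * (pi\<^sup>2 * (real M)\<^sup>2) \<le> \<epsilon>\<^sup>2 / 4"
      unfolding A B[symmetric] using hM2 by (intro mult_left_mono) auto
    have D: "1/(\<epsilon>/2) - 1 \<le> 2 / \<epsilon>" using e0 by simp
    have E: "0 \<le> 1/(\<epsilon>/2) - 1" using e0 by (simp add: field_simps)
    have "(1/(\<epsilon>/2) - 1) * ((4 * h\<^sup>2) * (pi\<^sup>2 * (real M)\<^sup>2)) \<le> (2 / \<epsilon>) * (\<epsilon>\<^sup>2 / 4)"
      using C D E e0 by (intro mult_mono) auto
    also have "\<dots> = \<epsilon> / 2" using e0 by (simp add: power2_eq_square)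
    finally show ?thesis unfolding h_def by (simp add: mult.assoc)
  qed
  have frame: "(1 - \<epsilon>) * (\<Sum>j\<in>K. (cmod (z j))\<^sup>2) \<le> (\<Sum>n\<in>R. (cmod (Uz U K z n))\<^sup>2)" for z
  proof -
    have "(1 - \<epsilon>) * (\<Sum>j\<in>K. (cmod (z j))\<^sup>2)
        \<le> ((1 - \<epsilon>/2) - (1/(\<epsilon>/2) - 1) * (4 * (fill_dist N t)\<^sup>2) * (pi\<^sup>2 * (real M)\<^sup>2)) * (\<Sum>j\<in>K. (cmod (z j))\<^sup>2)"
      using coef by (intro mult_right_mono sum_nonneg) auto
    also have "\<dots> \<le> (\<Sum>n\<in>R. tau N t n * (cmod (tp K z (t n)))\<^sup>2)"
      unfolding K_def R_def using e0 by (intro mz_bound[OF N0 tin inj]) auto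
    also have "\<dots> = (\<Sum>n\<in>R. (cmod (Uz U K z n))\<^sup>2)" using normsq by simp
    finally show ?thesis .
  qed
  have lsq: "lsq_residual N t M y z = sqrt (\<Sum>n\<in>R. (cmod (Uz U K z n - y n))\<^sup>2)" for z
  proof -
    have "(\<Sum>j\<in>{- int M..<int M}. Umat N t n j * projM M z j) = Uz U K z n" for n
      unfolding Uz_def U_def K_def projM_def by (intro sum.cong refl) auto
    then show ?thesis unfolding lsq_residual_def R_def by simp
  qed
  obtain xc where xc: "\<forall>j. j \<notin> K \<longrightarrow> xc j = 0" "NE U R K xc y"
    using ne_exists[OF fR fK] by blast
  have pyth: "(\<Sum>n\<in>R. (cmod (Uz U K z n - y n))\<^sup>2)
       = (\<Sum>n\<in>R. (cmod (Uz U K xc n - y n))\<^sup>2) + (\<Sum>n\<in>R. (cmod (Uz U K (\<lambda>j. z j - xc j) n))\<^sup>2)" for z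
    by (rule ne_pythagoras[OF xc(2)])
  have sol: "\<forall>z'. (\<forall>j. j \<notin> K \<longrightarrow> z' j = 0) \<longrightarrow> lsq_residual N t M y xc \<le> lsq_residual N t M y z'"
  proof (intro allI impI)
    fix z' :: "int \<Rightarrow> complex"
    have "0 \<le> (\<Sum>n\<in>R. (cmod (Uz U K (\<lambda>j. z' j - xc j) n))\<^sup>2)" by (intro sum_nonneg) auto
    then show "lsq_residual N t M y xc \<le> lsq_residual N t M y z'"
      unfolding lsq pyth[of z'] by simp
  qed
  have uniq: "z = xc" if z: "\<forall>j. j \<notin> K \<longrightarrow> z j = 0"
      "\<forall>z'. (\<forall>j. j \<notin> K \<longrightarrow> z' j = 0) \<longrightarrow> lsq_residual N t M y z \<le> lsq_residual N t M y z'" for z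
  proof -
    have "lsq_residual N t M y z \<le> lsq_residual N t M y xc" using z(2) xc(1) by blast
    then have "(\<Sum>n\<in>R. (cmod (Uz U K (\<lambda>j. z j - xc j) n))\<^sup>2) \<le> 0"
      unfolding lsq pyth[of z] by simp
    then have "(1 - \<epsilon>) * (\<Sum>j\<in>K. (cmod (z j - xc j))\<^sup>2) \<le> 0" using frame[of "\<lambda>j. z j - xc j"] by simp
    then have "(\<Sum>j\<in>K. (cmod (z j - xc j))\<^sup>2) \<le> 0" using e0
      by (simp add: mult_le_0_iff)
    then have "(\<Sum>j\<in>K. (cmod (z j - xc j))\<^sup>2) = 0" by (meson antisym sum_nonneg zero_le_power2)
    then have "\<forall>j\<in>K. (cmod (z j - xc j))\<^sup>2 = 0" using fK by (simp add: sum_nonneg_eq_0_iff)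
    then have "\<forall>j\<in>K. z j = xc j" by simp
    then show ?thesis using z(1) xc(1) by (intro ext) (metis)
  qed
  have err: "l2norm (\<lambda>j. x j - xc j)
                \<le> (1 + 1 / sqrt (1 - \<epsilon>)) * wl1norm w (\<lambda>j. x j - projM M x j) + \<eta> / sqrt (1 - \<epsilon>)"
    if w1: "\<forall>i. 1 \<le> w i" and ws: "(\<lambda>i. w i * cmod (x i - projM M x i)) summable_on UNIV" for w
  proof -
    define W where "W = wl1norm w (\<lambda>j. x j - projM M x j)"
    define px where "px = projM M x"
    have wpos: "0 \<le> w i" for i using w1 by (metis order.trans zero_le_one)
    have W0: "0 \<le> W" unfolding W_def wl1norm_def
      using wpos by (intro infsum_nonneg mult_nonneg_nonneg) auto
    have "cmod (e 1) \<le> \<eta>" using eb N0 by auto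
    then have eta0: "0 \<le> \<eta>" using norm_ge_zero[of "e 1"] by linarith
    have pxK: "\<forall>j. j \<notin> K \<longrightarrow> px j = 0" unfolding px_def projM_def K_def by auto
    have resid: "(cmod (Uz U K px n - y n))\<^sup>2 \<le> tau N t n * (W + \<eta>)\<^sup>2" if n: "n \<in> R" for n
    proof -
      have "y n - Uz U K px n = complex_of_real (sqrt (tau N t n)) *
              (((\<Sum>\<^sub>\<infinity>j. x j * fourier j (t n)) - tp K px (t n)) + e n)"
        unfolding y_def UzU by (simp add: algebra_simps)
      then have "cmod (Uz U K px n - y n) = sqrt (tau N t n) *
              cmod (((\<Sum>\<^sub>\<infinity>j. x j * fourier j (t n)) - tp K px (t n)) + e n)"
        using tau0[OF n] by (simp add: norm_mult norm_minus_commute)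
      also have "\<dots> \<le> sqrt (tau N t n) * (W + \<eta>)"
      proof (intro mult_left_mono)
        have "cmod ((\<Sum>\<^sub>\<infinity>j. x j * fourier j (t n)) - tp K px (t n)) \<le> W"
          unfolding W_def px_def K_def by (rule tail_sup[OF xs w1 ws])
        moreover have "cmod (e n) \<le> \<eta>" using eb n unfolding R_def by auto
        ultimately show "cmod (((\<Sum>\<^sub>\<infinity>j. x j * fourier j (t n)) - tp K px (t n)) + e n) \<le> W + \<eta>"
          by (meson add_mono norm_triangle_le)
      qed (use tau0[OF n] in simp)
      finally have "cmod (Uz U K px n - y n) \<le> sqrt (tau N t n) * (W + \<eta>)" .
      then have "(cmod (Uz U K px n - y n))\<^sup>2 \<le> (sqrt (tau N t n) * (W + \<eta>))\<^sup>2"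
        by (intro power_mono) auto
      also have "\<dots> = tau N t n * (W + \<eta>)\<^sup>2" using tau0[OF n] by (simp add: power_mult_distrib)
      finally show ?thesis .
    qed
    define D where "D = (\<Sum>j\<in>K. (cmod (x j - xc j))\<^sup>2)"
    have D0: "0 \<le> D" unfolding D_def by (intro sum_nonneg) auto
    have "(1 - \<epsilon>) * D \<le> (\<Sum>n\<in>R. (cmod (Uz U K (\<lambda>j. px j - xc j) n))\<^sup>2)"
    proof -
      have "D = (\<Sum>j\<in>K. (cmod (px j - xc j))\<^sup>2)" unfolding D_def px_def projM_def K_def
        by (intro sum.cong refl) auto
      then show ?thesis using frame[of "\<lambda>j. px j - xc j"] by simp
    qed
    also have "\<dots> \<le> (\<Sum>n\<in>R. (cmod (Uz U K px n - y n))\<^sup>2)"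
      using pyth[of px] by (simp add: sum_nonneg)
    also have "\<dots> \<le> (\<Sum>n\<in>R. tau N t n * (W + \<eta>)\<^sup>2)" by (intro sum_mono resid)
    also have "\<dots> = (W + \<eta>)\<^sup>2" using tausum by (simp add: sum_distrib_right[symmetric])
    finally have DD: "(1 - \<epsilon>) * D \<le> (W + \<eta>)\<^sup>2" .
    define s where "s = sqrt (1 - \<epsilon>)"
    have s0: "0 < s" unfolding s_def using e0 by simp
    have ss: "s\<^sup>2 = 1 - \<epsilon>" unfolding s_def using e0 by simp
    have sqD: "sqrt D \<le> (W + \<eta>) / s"
    proof -
      have a: "D * s\<^sup>2 \<le> (W + \<eta>)\<^sup>2" using DD unfolding ss by (simp add: mult.commute)
      have "D \<le> ((W + \<eta>) / s)\<^sup>2" using a s0 by (simp add: power_divide pos_le_divide_eq)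
      then have "sqrt D \<le> sqrt (((W + \<eta>) / s)\<^sup>2)" by (rule real_sqrt_le_mono)
      also have "\<dots> = (W + \<eta>) / s" using W0 eta0 s0 by simp
      finally show ?thesis .
    qed
    define zt where "zt j = x j - projM M x j" for j
    have l2t: "(\<lambda>j. (cmod (zt j))\<^sup>2) summable_on UNIV \<and> (\<Sum>\<^sub>\<infinity>j. (cmod (zt j))\<^sup>2) \<le> W\<^sup>2"
      unfolding W_def zt_def using tail_l2[OF w1 ws] by simp
    define g where "g j = (if j \<in> K then (cmod (x j - xc j))\<^sup>2 else 0)" for j
    have gs: "g summable_on UNIV"
    proof -
      have "((\<lambda>j. (cmod (x j - xc j))\<^sup>2) summable_on K) = (g summable_on UNIV)"
        by (rule summable_on_cong_neutral) (auto simp: g_def)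
      then show ?thesis using fK summable_on_finite by blast
    qed
    have gsum: "infsum g UNIV = D"
    proof -
      have "infsum g UNIV = infsum (\<lambda>j. (cmod (x j - xc j))\<^sup>2) K"
        by (rule infsum_cong_neutral) (auto simp: g_def)
      then show ?thesis unfolding D_def using fK by (simp add: infsum_finite)
    qed
    have split: "(cmod (x j - xc j))\<^sup>2 = (cmod (zt j))\<^sup>2 + g j" for j
      using xc(1) unfolding zt_def g_def projM_def K_def by auto
    have "l2norm (\<lambda>j. x j - xc j) = sqrt ((\<Sum>\<^sub>\<infinity>j. (cmod (zt j))\<^sup>2) + D)"
      unfolding l2norm_def split using infsum_add[of "\<lambda>j. (cmod (zt j))\<^sup>2" UNIV g] l2t gs gsum by simp
    also have "\<dots> \<le> sqrt (\<Sum>\<^sub>\<infinity>j. (cmod (zt j))\<^sup>2) + sqrt D"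
      by (intro sqrt_add_le_add_sqrt D0 infsum_nonneg) auto
    also have "\<dots> \<le> W + (W + \<eta>) / s"
    proof (intro add_mono sqD)
      have "sqrt (\<Sum>\<^sub>\<infinity>j. (cmod (zt j))\<^sup>2) \<le> sqrt (W\<^sup>2)" using l2t by (intro real_sqrt_le_mono) auto
      then show "sqrt (\<Sum>\<^sub>\<infinity>j. (cmod (zt j))\<^sup>2) \<le> W" using W0 by simp
    qed
    also have "\<dots> = (1 + 1 / s) * W + \<eta> / s" by (simp add: algebra_simps add_divide_distrib)
    finally show ?thesis unfolding W_def s_def .
  qed
  show ?thesis
    apply (rule exI[of _ xc])
    using xc(1) sol uniq err unfolding K_def by blast
qed


theorem theorem8p2:
  fixes \<epsilon> :: real
  assumes "0 < \<epsilon>" "\<epsilon> < 1"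
  shows "\<exists>c>0. \<forall>(M::nat) (N::nat) (t::nat \<Rightarrow> real) (x::int \<Rightarrow> complex) (e::nat \<Rightarrow> complex) (\<eta>::real).
     0 < M \<and> 0 < N \<and> inj_on t {1..N} \<and> (\<forall>n\<in>{1..N}. t n \<in> {-1..1})
     \<and> fill_dist N t \<le> c / real M
     \<and> (\<lambda>j. cmod (x j)) summable_on UNIV
     \<and> (\<forall>n\<in>{1..N}. cmod (e n) \<le> \<eta>)
     \<longrightarrow>
     (let f = (\<lambda>s. \<Sum>\<^sub>\<infinity>j. x j * fourier j s);
          y = (\<lambda>n. complex_of_real (sqrt (tau N t n)) * (f (t n) + e n));
          is_sol = (\<lambda>z. (\<forall>j. j \<notin> {- int M..<int M} \<longrightarrow> z j = 0) \<and>
                        (\<forall>z'. (\<forall>j. j \<notin> {- int M..<int M} \<longrightarrow> z' j = 0) \<longrightarrow>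
                               lsq_residual N t M y z \<le> lsq_residual N t M y z'))
      in \<exists>xc. is_sol xc \<and> (\<forall>z. is_sol z \<longrightarrow> z = xc) \<and>
           (\<forall>w::int \<Rightarrow> real. (\<forall>i. 1 \<le> w i) \<and>
                (\<lambda>i. w i * cmod ((\<lambda>j. x j - projM M x j) i)) summable_on UNIV \<longrightarrow>
              l2norm (\<lambda>j. x j - xc j)
                \<le> (1 + 1 / sqrt (1 - \<epsilon>)) * wl1norm w (\<lambda>j. x j - projM M x j)
                  + \<eta> / sqrt (1 - \<epsilon>)))"
proof -
  have c0: "0 < \<epsilon> / (4 * pi)" using assms by simp
  show ?thesis
  proof (rule exI[of _ "\<epsilon> / (4 * pi)"], intro conjI c0 allI impI)
    fix M N :: nat and t :: "nat \<Rightarrow> real" and x :: "int \<Rightarrow> complex" and e :: "nat \<Rightarrow> complex" and \<eta> :: real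
    assume H: "0 < M \<and> 0 < N \<and> inj_on t {1..N} \<and> (\<forall>n\<in>{1..N}. t n \<in> {-1..1})
     \<and> fill_dist N t \<le> \<epsilon> / (4 * pi) / real M
     \<and> (\<lambda>j. cmod (x j)) summable_on UNIV
     \<and> (\<forall>n\<in>{1..N}. cmod (e n) \<le> \<eta>)"
    show "let f = (\<lambda>s. \<Sum>\<^sub>\<infinity>j. x j * fourier j s);
          y = (\<lambda>n. complex_of_real (sqrt (tau N t n)) * (f (t n) + e n));
          is_sol = (\<lambda>z. (\<forall>j. j \<notin> {- int M..<int M} \<longrightarrow> z j = 0) \<and>
                        (\<forall>z'. (\<forall>j. j \<notin> {- int M..<int M} \<longrightarrow> z' j = 0) \<longrightarrow>
                               lsq_residual N t M y z \<le> lsq_residual N t M y z'))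
      in \<exists>xc. is_sol xc \<and> (\<forall>z. is_sol z \<longrightarrow> z = xc) \<and>
           (\<forall>w::int \<Rightarrow> real. (\<forall>i. 1 \<le> w i) \<and>
                (\<lambda>i. w i * cmod ((\<lambda>j. x j - projM M x j) i)) summable_on UNIV \<longrightarrow>
              l2norm (\<lambda>j. x j - xc j)
                \<le> (1 + 1 / sqrt (1 - \<epsilon>)) * wl1norm w (\<lambda>j. x j - projM M x j)
                  + \<eta> / sqrt (1 - \<epsilon>))"
      unfolding Let_def using H by (intro main_thm assms) auto
  qed
qed


end
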